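(* Let $l,m,N$ be positive integers with $m>l\ge 5$, let $\boldsymbol\sigma\in\mathrm{ir}(l)$, and let $B_1,\dots,B_N\in\Sigma_q^m$. If $\boldsymbol\sigma B_i\boldsymbol\sigma\in\mathrm{ir}(m+2l)$ for all $i\in[N]$, then $B_1\boldsymbol\sigma B_2\boldsymbol\sigma\cdots\boldsymbol\sigma B_N\in\mathrm{ir}(N(m+l)-l)$.
   Context: $\Sigma_q=\{0,\dots,q-1\}$, $q\ge3$; $[N]=\{1,\dots,N\}$. A string is irreducible if it has no substring of the form $\mathbf{a}\mathbf{a}$ with $1\le|\mathbf{a}|\le3$; $\mathrm{ir}(n)$ is the set of irreducible strings of length $n$ over $\Sigma_q$. *)

theory Defs
  imports Main
begin

text \<open>Strings over the alphabet Sigma_q = {0,...,q-1} are lists of naturals with entries below q.\<close>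

definition Sigma :: "nat \<Rightarrow> nat set" where
  "Sigma q = {0..<q}"

definition irreducible :: "nat list \<Rightarrow> bool" where
  "irreducible s \<longleftrightarrow>
     \<not> (\<exists>i k. 1 \<le> k \<and> k \<le> 3 \<and> i + 2 * k \<le> length s \<and>
             take k (drop i s) = take k (drop (i + k) s))"

definition ir :: "nat \<Rightarrow> nat \<Rightarrow> nat list set" where
  "ir q n = {s. length s = n \<and> set s \<subseteq> Sigma q \<and> irreducible s}"

definition join_with :: "nat list \<Rightarrow> (nat \<Rightarrow> nat list) \<Rightarrow> nat \<Rightarrow> nat list" where
  "join_with \<sigma> B N = B 1 @ concat (map (\<lambda>i. \<sigma> @ B i) [2..<N+1])"

end

theory Submission
  imports Defs
begin

lemma irr_infix:
  assumes "irreducible (a @ u @ b)" shows "irreducible u"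
  unfolding irreducible_def
proof clarify
  fix i k assume h: "1 \<le> k" "k \<le> 3" "i + 2 * k \<le> length u"
    "take k (drop i u) = take k (drop (i + k) u)"
  have e1: "take k (drop (i + length a) (a @ u @ b)) = take k (drop i u)"
    using h by (simp add: drop_append take_append)
  have e2: "take k (drop (i + length a + k) (a @ u @ b)) = take k (drop (i+k) u)"
    using h by (simp add: drop_append take_append)
  have "i + length a + 2 * k \<le> length (a @ u @ b)" using h by simp
  then show False using assms h e1 e2 unfolding irreducible_def
    by (metis (no_types, lifting))
qed

lemma irr_prefix: "irreducible (u @ b) \<Longrightarrow> irreducible u"
  using irr_infix[of "[]" u b] by simp

lemma irr_suffix: "irreducible (a @ u) \<Longrightarrow> irreducible u"
  using irr_infix[of a u "[]"] by simp

lemma irr_glue: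
  assumes x: "irreducible x" and c: "5 \<le> c" "c \<le> length x"
    and xy: "irreducible (drop (length x - c) x @ y)"
  shows "irreducible (x @ y)"
  unfolding irreducible_def
proof clarify
  fix i k assume h: "1 \<le> k" "k \<le> 3" "i + 2 * k \<le> length (x @ y)"
    "take k (drop i (x @ y)) = take k (drop (i + k) (x @ y))"
  show False
  proof (cases "i + 2 * k \<le> length x")
    case True
    have "take k (drop i (x @ y)) = take k (drop i x)"
      "take k (drop (i+k) (x @ y)) = take k (drop (i+k) x)"
      using True by (simp_all add: drop_append take_append)
    then show False using x h True unfolding irreducible_def by metis
  next
    case False
    define d where "d = length x - c"
    have id: "i \<ge> d" using False h c unfolding d_def by simp
    have dd: "drop d (x @ y) = drop d x @ y" using c unfolding d_def by simp
    have "drop i (x @ y) = drop (i - d) (drop d x @ y)"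
      using id dd by (metis drop_drop le_add_diff_inverse2)
    moreover have "drop (i + k) (x @ y) = drop (i - d + k) (drop d x @ y)"
      using id dd by (metis drop_drop add.commute add.left_commute le_add_diff_inverse2)
    moreover have "i - d + 2 * k \<le> length (drop d x @ y)" using h id c unfolding d_def by simp
    ultimately show False using xy h unfolding irreducible_def d_def by metis
  qed
qed

lemma join_Suc:
  assumes "n \<ge> 1" shows "join_with \<sigma> B (Suc n) = join_with \<sigma> B n @ \<sigma> @ B (Suc n)"
  using assms unfolding join_with_def by simp

lemma join_1: "join_with \<sigma> B 1 = B 1"
  unfolding join_with_def by simp

theorem lemma3:
  fixes q l m N :: nat and \<sigma> :: "nat list" and B :: "nat \<Rightarrow> nat list"
  assumes "q \<ge> 3"
    and "N \<ge> 1" and "l \<ge> 5" and "m > l"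
    and "\<sigma> \<in> ir q l"
    and "\<forall>i\<in>{1..N}. length (B i) = m \<and> set (B i) \<subseteq> Sigma q"
    and "\<forall>i\<in>{1..N}. \<sigma> @ B i @ \<sigma> \<in> ir q (m + 2 * l)"
  shows "join_with \<sigma> B N \<in> ir q (N * (m + l) - l)"
proof -
  have sig: "length \<sigma> = l" "set \<sigma> \<subseteq> Sigma q" using assms(5) unfolding ir_def by auto
  have P: "n \<le> N \<longrightarrow> (\<exists>p. join_with \<sigma> B n = p @ B n) \<and> join_with \<sigma> B n \<in> ir q (n * (m + l) - l)"
    if "n \<ge> 1" for n
    using that
  proof (induction n rule: nat_induct_at_least)
    case base
    then show ?case using assms(6) sig unfolding join_1 ir_def
      using assms(7) irr_infix[of \<sigma> "B 1" \<sigma>] by (auto simp: ir_def)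
  next
    case (Suc n)
    show ?case
    proof
      assume nN: "Suc n \<le> N"
      from Suc.IH nN obtain p where p: "join_with \<sigma> B n = p @ B n"
        and ir: "join_with \<sigma> B n \<in> ir q (n * (m + l) - l)" by auto
      have Bn: "length (B n) = m" "set (B n) \<subseteq> Sigma q"
        "irreducible (\<sigma> @ B n @ \<sigma>)"
        using assms(6,7) Suc.hyps nN by (auto simp: ir_def)
      have Bs: "length (B (Suc n)) = m" "set (B (Suc n)) \<subseteq> Sigma q"
        "irreducible (\<sigma> @ B (Suc n) @ \<sigma>)"
        using assms(6,7) Suc.hyps nN by (auto simp: ir_def)
      have i1: "irreducible (B n @ \<sigma>)" using Bn(3) irr_suffix[of \<sigma> "B n @ \<sigma>"] by simp
      have i2: "irreducible (\<sigma> @ B (Suc n))" using Bs(3) irr_prefix[of "\<sigma> @ B (Suc n)" \<sigma>] by simp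
      have i3: "irreducible ((B n @ \<sigma>) @ B (Suc n))"
        using irr_glue[OF i1, of l "B (Suc n)"] i2 assms(3) sig by simp
      have lx: "length (join_with \<sigma> B n) = n * (m + l) - l" using ir by (simp add: ir_def)
      have i4: "irreducible (join_with \<sigma> B n @ \<sigma> @ B (Suc n))"
        using irr_glue[of "join_with \<sigma> B n" m "\<sigma> @ B (Suc n)"] ir i3 assms(3,4) p Bn(1)
        by (simp add: ir_def)
      have "length (join_with \<sigma> B n @ \<sigma> @ B (Suc n)) = Suc n * (m + l) - l"
        using lx sig Bs Suc.hyps by (cases n) (auto simp: algebra_simps)
      then show "(\<exists>p. join_with \<sigma> B (Suc n) = p @ B (Suc n)) \<and>
          join_with \<sigma> B (Suc n) \<in> ir q (Suc n * (m + l) - l)"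
        using join_Suc[OF Suc.hyps] i4 ir sig Bs unfolding ir_def by auto
    qed
  qed
  then show ?thesis using assms(2) by blast
qed

end
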